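(* Suppose Assumption A holds and the PP-BDR property holds for $\tilde S$ (with respect to the generators $\tilde G$) with order $k'$. Then $\overline{\mathrm{conv}(S)}=\widetilde{\mathrm{TH}}_{k'}(\tilde G)$.
   Context: $X=(X_1,\dots,X_n)$, $\tilde X=(X_0,X_1,\dots,X_n)$, $\|\cdot\|_2$ Euclidean norm. For $f\in\mathbb{R}[X]$ of degree $d$, its homogenization is $\tilde f(\tilde X)=X_0^df(X/X_0)\in\mathbb{R}[\tilde X]$. Fix $g_1,\dots,g_m\in\mathbb{R}[X]$ and $S=\{x\in\mathbb{R}^n:g_1(x)\ge0,\dots,g_m(x)\ge0\}$. Define $\tilde S^{o}=\{\tilde x=(x_0,x)\in\mathbb{R}^{n+1}:\tilde g_j(\tilde x)\ge0\ (j=1,\dots,m),\ x_0>0\}$, $\tilde S^{c}$ the same set with $x_0\ge0$ in place of $x_0>0$, and $\tilde S=\tilde S^c\cap\{\|\tilde x\|_2=1\}$. $S$ is closed at $\infty$ if $\overline{\tilde S^{o}}=\tilde S^{c}$. For a finite set $H=\{h_1,\dots,h_r\}$ of polynomials, the $k$-th quadratic module is $\mathcal{Q}_k(H)=\{\sum_{j=0}^r\sigma_jh_j:h_0=1,\ \sigma_j\text{ sums of squares of polynomials},\ \deg(\sigma_jh_j)\le2k\}$. Let $\tilde G=\{\tilde g_1,\dots,\tilde g_m,X_0,\|\tilde X\|_2^2-1,1-\|\tilde X\|_2^2\}$. Let $\mathcal{P}[\tilde X]_1$ be the set of linear forms (homogeneous of degree one) in $\tilde X$ together with $0$. The modified theta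 body is $\widetilde{\mathrm{TH}}_k(\tilde G)=\{x\in\mathbb{R}^n:\tilde l(1,x)\ge0\ \forall\tilde l\in\mathcal{Q}_k(\tilde G)\cap\mathcal{P}[\tilde X]_1\}$. A closed convex cone $K$ is pointed if $K\cap(-K)=\{0\}$. Assumption A: (i) $S$ is closed at $\infty$; (ii) the convex cone $\mathrm{conv}(\overline{\tilde S^{o}})$ is closed and pointed. PP-BDR property: for a set $T=\{z:h_1(z)\ge0,\dots,h_r(z)\ge0\}$ given by generators $H=\{h_1,\dots,h_r\}$, PP-BDR holds for $T$ with order $k$ if every affine polynomial $p$ that is positive on $T$ belongs to $\mathcal{Q}_k(H)$, except possibly for a set of coefficient vectors of $p$ of Lebesgue measure zero. *)

theory Defs
  imports "HOL-Analysis.Analysis" "HOL-Library.Poly_Mapping"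
begin

type_synonym 'v mpoly = "('v \<Rightarrow>\<^sub>0 nat) \<Rightarrow>\<^sub>0 real"

definition mdeg :: "('v \<Rightarrow>\<^sub>0 nat) \<Rightarrow> nat" where
  "mdeg \<alpha> = sum (Poly_Mapping.lookup \<alpha>) (Poly_Mapping.keys \<alpha>)"

text \<open>total degree (degree of the zero polynomial is taken to be 0)\<close>
definition tdeg :: "'v mpoly \<Rightarrow> nat" where
  "tdeg p = Max (insert 0 (mdeg ` Poly_Mapping.keys p))"

definition meval :: "'v mpoly \<Rightarrow> ('v \<Rightarrow> real) \<Rightarrow> real" where
  "meval p x = (\<Sum>\<alpha>\<in>Poly_Mapping.keys p. Poly_Mapping.lookup p \<alpha> * (\<Prod>v\<in>Poly_Mapping.keys \<alpha>. x v ^ Poly_Mapping.lookup \<alpha> v))"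

definition Xvar :: "'v \<Rightarrow> 'v mpoly" where
  "Xvar v = Poly_Mapping.single (Poly_Mapping.single v 1) 1"

text \<open>lift an exponent vector in X_1..X_n to one in X_0,X_1..X_n (None = X_0)\<close>
definition lift_mon :: "('v \<Rightarrow>\<^sub>0 nat) \<Rightarrow> ('v option \<Rightarrow>\<^sub>0 nat)" where
  "lift_mon \<alpha> = (\<Sum>v\<in>Poly_Mapping.keys \<alpha>. Poly_Mapping.single (Some v) (Poly_Mapping.lookup \<alpha> v))"

text \<open>homogenization  X_0^d f(X/X_0), d = total degree of f\<close>
definition homog :: "'v mpoly \<Rightarrow> 'v option mpoly" where
  "homog f = (\<Sum>\<alpha>\<in>Poly_Mapping.keys f. Poly_Mapping.single
       (lift_mon \<alpha> + Poly_Mapping.single None (tdeg f - mdeg \<alpha>)) (Poly_Mapping.lookup f \<alpha>))"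

definition sos :: "'v mpoly \<Rightarrow> bool" where
  "sos \<sigma> \<longleftrightarrow> (\<exists>qs. \<sigma> = sum_list (map (\<lambda>q. q ^ 2) qs))"

text \<open>k-th (truncated) quadratic module of H = [h_1,...,h_r], with h_0 = 1\<close>
definition quadmod :: "'v mpoly list \<Rightarrow> nat \<Rightarrow> 'v mpoly set" where
  "quadmod H k = {p. \<exists>\<sigma>s. length \<sigma>s = length (1 # H) \<and> (\<forall>\<sigma>\<in>set \<sigma>s. sos \<sigma>) \<and>
      (\<forall>i<length (1 # H). tdeg (\<sigma>s ! i * (1 # H) ! i) \<le> 2 * k) \<and>
      p = (\<Sum>i<length (1 # H). \<sigma>s ! i * (1 # H) ! i)}"

text \<open>linear forms (homogeneous of degree one) together with 0\<close>
definition linform :: "'v mpoly \<Rightarrow> bool" where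
  "linform l \<longleftrightarrow> (\<forall>\<alpha>\<in>Poly_Mapping.keys l. mdeg \<alpha> = 1)"

definition normsq :: "('v::finite) mpoly" where
  "normsq = (\<Sum>v\<in>UNIV. Xvar v ^ 2)"

definition embed :: "real \<Rightarrow> real ^ ('n::finite) \<Rightarrow> real ^ ('n option)" where
  "embed x0 x = (\<chi> i. case i of None \<Rightarrow> x0 | Some j \<Rightarrow> x $ j)"

definition S_set :: "('n::finite) mpoly list \<Rightarrow> (real ^ 'n) set" where
  "S_set gs = {x. \<forall>g\<in>set gs. meval g (($) x) \<ge> 0}"

definition St_open :: "('n::finite) mpoly list \<Rightarrow> (real ^ ('n option)) set" where
  "St_open gs = {z. (\<forall>g\<in>set gs. meval (homog g) (($) z) \<ge> 0) \<and> z $ None > 0}"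

definition St_closed :: "('n::finite) mpoly list \<Rightarrow> (real ^ ('n option)) set" where
  "St_closed gs = {z. (\<forall>g\<in>set gs. meval (homog g) (($) z) \<ge> 0) \<and> z $ None \<ge> 0}"

definition St :: "('n::finite) mpoly list \<Rightarrow> (real ^ ('n option)) set" where
  "St gs = St_closed gs \<inter> {z. norm z = 1}"

definition Gt :: "('n::finite) mpoly list \<Rightarrow> 'n option mpoly list" where
  "Gt gs = map homog gs @ [Xvar None, normsq - 1, 1 - normsq]"

definition closed_at_infinity :: "('n::finite) mpoly list \<Rightarrow> bool" where
  "closed_at_infinity gs \<longleftrightarrow> closure (St_open gs) = St_closed gs"

definition pointed :: "('a::real_vector) set \<Rightarrow> bool" where
  "pointed K \<longleftrightarrow> K \<inter> uminus ` K = {0}"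

definition assumptionA :: "('n::finite) mpoly list \<Rightarrow> bool" where
  "assumptionA gs \<longleftrightarrow> closed_at_infinity gs \<and>
     closed (convex hull (closure (St_open gs))) \<and> pointed (convex hull (closure (St_open gs)))"

definition theta_mod :: "nat \<Rightarrow> ('n::finite) option mpoly list \<Rightarrow> (real ^ 'n) set" where
  "theta_mod k H = {x. \<forall>l\<in>quadmod H k. linform l \<longrightarrow> meval l (($) (embed 1 x)) \<ge> 0}"

definition affpoly :: "real \<Rightarrow> real ^ ('v::finite) \<Rightarrow> 'v mpoly" where
  "affpoly c a = Poly_Mapping.single 0 c + (\<Sum>v\<in>UNIV. Poly_Mapping.single (Poly_Mapping.single v 1) (a $ v))"

definition semialg :: "('v::finite) mpoly list \<Rightarrow> (real ^ 'v) set" where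
  "semialg H = {z. \<forall>h\<in>set H. meval h (($) z) \<ge> 0}"

definition pp_bdr :: "('v::finite) mpoly list \<Rightarrow> nat \<Rightarrow> bool" where
  "pp_bdr H k \<longleftrightarrow> (\<exists>N::(real \<times> (real ^ 'v)) set. N \<in> null_sets lebesgue \<and>
     (\<forall>c a. (c, a) \<notin> N \<longrightarrow> (\<forall>z\<in>semialg H. meval (affpoly c a) (($) z) > 0) \<longrightarrow>
        affpoly c a \<in> quadmod H k))"

end

theory Submission
  imports Defs
begin



definition mon :: "('v \<Rightarrow>\<^sub>0 nat) \<Rightarrow> ('v \<Rightarrow> real) \<Rightarrow> real" where
  "mon \<alpha> z = (\<Prod>v\<in>Poly_Mapping.keys \<alpha>. z v ^ Poly_Mapping.lookup \<alpha> v)"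

lemma mon_superset: "finite B \<Longrightarrow> Poly_Mapping.keys \<alpha> \<subseteq> B \<Longrightarrow>
  mon \<alpha> z = (\<Prod>v\<in>B. z v ^ Poly_Mapping.lookup \<alpha> v)"
  unfolding mon_def
  by (rule prod.mono_neutral_left) (auto simp: in_keys_iff)

lemma mon_add: "mon (\<alpha> + \<beta>) z = mon \<alpha> z * mon \<beta> z"
proof -
  let ?B = "Poly_Mapping.keys \<alpha> \<union> Poly_Mapping.keys \<beta>"
  have "mon (\<alpha> + \<beta>) z = (\<Prod>v\<in>?B. z v ^ Poly_Mapping.lookup (\<alpha> + \<beta>) v)"
    by (rule mon_superset) (auto dest: set_mp[OF keys_add])
  also have "\<dots> = (\<Prod>v\<in>?B. z v ^ Poly_Mapping.lookup \<alpha> v) * (\<Prod>v\<in>?B. z v ^ Poly_Mapping.lookup \<beta> v)"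
    by (simp add: lookup_add power_add prod.distrib)
  also have "\<dots> = mon \<alpha> z * mon \<beta> z"
    by (simp add: mon_superset[symmetric])
  finally show ?thesis .
qed

lemma mon_zero[simp]: "mon 0 z = 1" by (simp add: mon_def)

lemma mon_sum: "finite I \<Longrightarrow> mon (\<Sum>i\<in>I. m i) z = (\<Prod>i\<in>I. mon (m i) z)"
  by (induction I rule: finite_induct) (auto simp: mon_add)

lemma mon_single: "mon (Poly_Mapping.single v k) z = z v ^ k"
  by (subst mon_superset[of "{v}"]) auto

lemma meval_superset: "finite A \<Longrightarrow> Poly_Mapping.keys p \<subseteq> A \<Longrightarrow>
  meval p z = (\<Sum>\<alpha>\<in>A. Poly_Mapping.lookup p \<alpha> * mon \<alpha> z)"
  unfolding meval_def mon_def[symmetric]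
  by (rule sum.mono_neutral_left) (auto simp: in_keys_iff)

lemma meval_add: "meval (p + q) z = meval p z + meval q z"
proof -
  let ?B = "Poly_Mapping.keys p \<union> Poly_Mapping.keys q"
  have "meval (p + q) z = (\<Sum>\<alpha>\<in>?B. Poly_Mapping.lookup (p+q) \<alpha> * mon \<alpha> z)"
    by (rule meval_superset) (auto dest: set_mp[OF keys_add])
  also have "\<dots> = (\<Sum>\<alpha>\<in>?B. Poly_Mapping.lookup p \<alpha> * mon \<alpha> z) + (\<Sum>\<alpha>\<in>?B. Poly_Mapping.lookup q \<alpha> * mon \<alpha> z)"
    by (simp add: lookup_add distrib_right sum.distrib)
  also have "\<dots> = meval p z + meval q z"
    by (simp add: meval_superset[symmetric])
  finally show ?thesis .
qed

lemma meval_zero[simp]: "meval 0 z = 0" by (simp add: meval_def)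

lemma meval_uminus: "meval (- p) z = - meval p z"
  by (simp add: meval_def sum_negf)

lemma meval_diff: "meval (p - q) z = meval p z - meval q z"
  using meval_add[of p "-q" z] by (simp add: meval_uminus)

lemma meval_sum: "finite I \<Longrightarrow> meval (\<Sum>i\<in>I. m i) z = (\<Sum>i\<in>I. meval (m i) z)"
  by (induction I rule: finite_induct) (auto simp: meval_add)

lemma meval_single: "meval (Poly_Mapping.single \<alpha> c) z = c * mon \<alpha> z"
  by (subst meval_superset[of "{\<alpha>}"]) auto

lemma expansion: "p = (\<Sum>\<alpha>\<in>Poly_Mapping.keys p. Poly_Mapping.single \<alpha> (Poly_Mapping.lookup p \<alpha>))"
  by (rule poly_mapping_eqI) (auto simp: lookup_sum lookup_single when_def in_keys_iff
      intro: sum.neutral)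

lemma meval_mult: "meval (p * q) z = meval p z * meval q z"
proof -
  have "p * q = (\<Sum>\<alpha>\<in>Poly_Mapping.keys p. Poly_Mapping.single \<alpha> (Poly_Mapping.lookup p \<alpha>)) *
     (\<Sum>\<beta>\<in>Poly_Mapping.keys q. Poly_Mapping.single \<beta> (Poly_Mapping.lookup q \<beta>))"
    by (subst expansion[of p], subst expansion[of q]) (rule refl)
  also have "\<dots> = (\<Sum>\<alpha>\<in>Poly_Mapping.keys p. \<Sum>\<beta>\<in>Poly_Mapping.keys q.
      Poly_Mapping.single (\<alpha>+\<beta>) (Poly_Mapping.lookup p \<alpha> * Poly_Mapping.lookup q \<beta>))"
    by (simp add: sum_distrib_left sum_distrib_right mult_single) (rule sum.swap)
  finally have "meval (p*q) z = (\<Sum>\<alpha>\<in>Poly_Mapping.keys p. \<Sum>\<beta>\<in>Poly_Mapping.keys q.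
      Poly_Mapping.lookup p \<alpha> * mon \<alpha> z * (Poly_Mapping.lookup q \<beta> * mon \<beta> z))"
    by (simp add: meval_sum meval_single mon_add algebra_simps)
  also have "\<dots> = meval p z * meval q z"
    by (simp add: meval_def mon_def sum_product)
  finally show ?thesis .
qed

lemma meval_one[simp]: "meval 1 z = 1"
  by (simp add: meval_def)

lemma meval_const: "meval (Poly_Mapping.single 0 c) z = c"
  by (simp add: meval_single)

lemma meval_sos: "sos \<sigma> \<Longrightarrow> meval \<sigma> z \<ge> 0"
proof -
  assume "sos \<sigma>"
  then obtain qs where "\<sigma> = sum_list (map (\<lambda>q. q ^ 2) qs)" by (auto simp: sos_def)
  moreover have "meval (sum_list (map (\<lambda>q. q ^ 2) qs)) z \<ge> 0"
    by (induction qs) (auto simp: meval_add meval_mult power2_eq_square)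
  ultimately show ?thesis by simp
qed

lemma meval_Xvar: "meval (Xvar v) z = z v"
  by (simp add: Xvar_def meval_single mon_single)




lemma meval_power: "meval (p ^ n) z = meval p z ^ n"
  by (induction n) (auto simp: meval_mult)

lemma mdeg_le_tdeg: "\<alpha> \<in> Poly_Mapping.keys f \<Longrightarrow> mdeg \<alpha> \<le> tdeg f"
  unfolding tdeg_def by (rule Max_ge) auto

lemma mon_lift: assumes "\<forall>v. w (Some v) = t * y v"
  shows "mon (lift_mon \<alpha>) w = t ^ mdeg \<alpha> * mon \<alpha> y"
proof -
  have "mon (lift_mon \<alpha>) w = (\<Prod>v\<in>Poly_Mapping.keys \<alpha>. (t * y v) ^ Poly_Mapping.lookup \<alpha> v)"
    unfolding lift_mon_def by (simp add: mon_sum mon_single assms)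
  also have "\<dots> = t ^ mdeg \<alpha> * mon \<alpha> y"
    by (simp add: power_mult_distrib prod.distrib mdeg_def mon_def power_sum)
  finally show ?thesis .
qed

lemma meval_homog: assumes "w None = t" "\<forall>v. w (Some v) = t * y v"
  shows "meval (homog f) w = t ^ tdeg f * meval f y"
proof -
  have "meval (homog f) w = (\<Sum>\<alpha>\<in>Poly_Mapping.keys f. Poly_Mapping.lookup f \<alpha> *
      (t ^ mdeg \<alpha> * mon \<alpha> y * t ^ (tdeg f - mdeg \<alpha>)))"
    unfolding homog_def by (simp add: meval_sum meval_single mon_add mon_single mon_lift[OF assms(2)] assms(1))
  also have "\<dots> = (\<Sum>\<alpha>\<in>Poly_Mapping.keys f. t ^ tdeg f * (Poly_Mapping.lookup f \<alpha> * mon \<alpha> y))"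
  proof (rule sum.cong[OF refl])
    fix \<alpha> assume "\<alpha> \<in> Poly_Mapping.keys f"
    then have "mdeg \<alpha> \<le> tdeg f" by (rule mdeg_le_tdeg)
    then have "t ^ mdeg \<alpha> * t ^ (tdeg f - mdeg \<alpha>) = t ^ tdeg f"
      by (simp add: power_add[symmetric])
    then show "Poly_Mapping.lookup f \<alpha> * (t ^ mdeg \<alpha> * mon \<alpha> y * t ^ (tdeg f - mdeg \<alpha>)) =
      t ^ tdeg f * (Poly_Mapping.lookup f \<alpha> * mon \<alpha> y)"
      by (metis mult.assoc mult.commute)
  qed
  also have "\<dots> = t ^ tdeg f * meval f y"
    by (simp add: meval_def mon_def sum_distrib_left)
  finally show ?thesis .
qed

lemma meval_affpoly: "meval (affpoly c a) z = c + (\<Sum>v\<in>UNIV. a $ v * z v)"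
  unfolding affpoly_def
  by (simp add: meval_add meval_sum meval_single mon_single)

lemma mdeg1: assumes "mdeg \<alpha> = 1" shows "\<exists>v. \<alpha> = Poly_Mapping.single v 1"
proof -
  let ?K = "Poly_Mapping.keys \<alpha>"
  have "?K \<noteq> {}" using assms by (auto simp: mdeg_def)
  then obtain v where v: "v \<in> ?K" by blast
  have fin: "finite ?K" by simp
  have "mdeg \<alpha> = Poly_Mapping.lookup \<alpha> v + sum (Poly_Mapping.lookup \<alpha>) (?K - {v})"
    unfolding mdeg_def using v fin by (simp add: sum.remove)
  moreover have "Poly_Mapping.lookup \<alpha> v \<ge> 1" using v by (simp add: in_keys_iff)
  ultimately have a1: "Poly_Mapping.lookup \<alpha> v = 1" and s0: "sum (Poly_Mapping.lookup \<alpha>) (?K - {v}) = 0"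
    using assms by auto
  have "\<forall>u\<in>?K - {v}. Poly_Mapping.lookup \<alpha> u = 0" using s0 fin by simp
  then have "?K \<subseteq> {v}" by (auto simp: in_keys_iff)
  then have "\<forall>u. u \<noteq> v \<longrightarrow> Poly_Mapping.lookup \<alpha> u = 0" by (auto simp: in_keys_iff)
  then have "\<alpha> = Poly_Mapping.single v 1"
    by (intro poly_mapping_eqI) (auto simp: lookup_single when_def a1)
  then show ?thesis by blast
qed

lemma meval_linform: fixes l :: "('v::finite) mpoly"
  assumes "linform l"
  shows "meval l z = (\<Sum>v\<in>UNIV. Poly_Mapping.lookup l (Poly_Mapping.single v 1) * z v)"
proof -
  have sub: "Poly_Mapping.keys l \<subseteq> range (\<lambda>v. Poly_Mapping.single v (1::nat))"
    using assms mdeg1 by (fastforce simp: linform_def)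
  have inj: "inj (\<lambda>v. Poly_Mapping.single v (1::nat))"
    by (rule injI) (metis lookup_single_eq lookup_single_not_eq one_neq_zero)
  have "meval l z = (\<Sum>\<alpha>\<in>range (\<lambda>v. Poly_Mapping.single v (1::nat)). Poly_Mapping.lookup l \<alpha> * mon \<alpha> z)"
    by (rule meval_superset[OF _ sub]) simp
  also have "\<dots> = (\<Sum>v\<in>UNIV. Poly_Mapping.lookup l (Poly_Mapping.single v 1) * z v)"
    by (subst sum.reindex[OF inj]) (simp add: mon_single)
  finally show ?thesis .
qed

lemma meval_normsq: "meval (normsq :: ('v::finite) mpoly) z = (\<Sum>v\<in>UNIV. z v ^ 2)"
  unfolding normsq_def by (simp add: meval_sum meval_power meval_Xvar)

lemma meval_quadmod: assumes "p \<in> quadmod H k" "\<forall>h\<in>set H. meval h z \<ge> 0"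
  shows "meval p z \<ge> 0"
proof -
  obtain \<sigma>s where len: "length \<sigma>s = length (1 # H)" and sos: "\<forall>\<sigma>\<in>set \<sigma>s. sos \<sigma>"
    and p: "p = (\<Sum>i<length (1 # H). \<sigma>s ! i * (1 # H) ! i)"
    using assms(1) unfolding quadmod_def by blast
  have "\<forall>h\<in>set (1#H). meval h z \<ge> 0" using assms(2) by auto
  then have "\<And>i. i < length (1 # H) \<Longrightarrow> meval (\<sigma>s ! i * (1 # H) ! i) z \<ge> 0"
    using sos len unfolding meval_mult by (metis mult_nonneg_nonneg meval_sos nth_mem)
  then show ?thesis unfolding p meval_sum[OF finite_lessThan] by (intro sum_nonneg) auto
qed




lemma sum_option: "(\<Sum>v\<in>(UNIV::('n::finite) option set). f v) = f None + (\<Sum>j\<in>UNIV. f (Some j))"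
  by (simp add: UNIV_option_conv sum.reindex)

lemma embed_None[simp]: "embed t x $ None = t" and embed_Some[simp]: "embed t x $ Some j = x $ j"
  by (simp_all add: embed_def)

lemma inner_embed: "(a::real^('n::finite) option) \<bullet> embed t x = a$None * t + (\<chi> j. a$Some j) \<bullet> x"
  by (simp add: inner_vec_def sum_option)

definition lv :: "('v::finite) mpoly \<Rightarrow> real^'v" where
  "lv l = (\<chi> v. Poly_Mapping.lookup l (Poly_Mapping.single v 1))"

lemma meval_linform_inner: "linform l \<Longrightarrow> meval l (($) z) = lv l \<bullet> z"
  by (simp add: meval_linform lv_def inner_vec_def)

lemma meval_affpoly_inner: "meval (affpoly c a) (($) z) = c + a \<bullet> z"
  by (simp add: meval_affpoly inner_vec_def)

lemma mdeg_single1: "mdeg (Poly_Mapping.single v (1::nat)) = 1"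
  by (simp add: mdeg_def)

lemma linform_affpoly0: "linform (affpoly 0 a)"
proof -
  have "Poly_Mapping.keys (affpoly 0 a) \<subseteq> (\<Union>v\<in>UNIV. Poly_Mapping.keys (Poly_Mapping.single (Poly_Mapping.single v (1::nat)) (a $ v)))"
    unfolding affpoly_def single_zero add_0 by (rule keys_sum)
  also have "\<dots> \<subseteq> range (\<lambda>v. Poly_Mapping.single v 1)" by auto
  finally show ?thesis unfolding linform_def using mdeg_single1 by fastforce
qed

lemma tdeg_le_iff: "tdeg q \<le> n \<longleftrightarrow> (\<forall>\<alpha>\<in>Poly_Mapping.keys q. mdeg \<alpha> \<le> n)"
  unfolding tdeg_def by (subst Max_le_iff) auto

lemma sos_add_const: assumes "sos \<sigma>" "d \<ge> 0" shows "sos (\<sigma> + Poly_Mapping.single 0 d)"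
proof -
  obtain qs where qs: "\<sigma> = sum_list (map (\<lambda>q. q ^ 2) qs)" using assms(1) by (auto simp: sos_def)
  have "Poly_Mapping.single 0 d = (Poly_Mapping.single 0 (sqrt d) :: 'a mpoly) ^ 2"
    using assms(2) by (simp add: power2_eq_square mult_single)
  then have "\<sigma> + Poly_Mapping.single 0 d = sum_list (map (\<lambda>q. q ^ 2) (qs @ [Poly_Mapping.single 0 (sqrt d)]))"
    by (simp add: qs)
  then show ?thesis unfolding sos_def by blast
qed

lemma quadmod_add_const: assumes "p \<in> quadmod H k" "d \<ge> 0"
  shows "p + Poly_Mapping.single 0 d \<in> quadmod H k"
proof -
  obtain \<sigma>s where len: "length \<sigma>s = length (1 # H)" and sos: "\<forall>\<sigma>\<in>set \<sigma>s. sos \<sigma>"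
    and deg: "\<forall>i<length (1 # H). tdeg (\<sigma>s ! i * (1 # H) ! i) \<le> 2 * k"
    and p: "p = (\<Sum>i<length (1 # H). \<sigma>s ! i * (1 # H) ! i)"
    using assms(1) unfolding quadmod_def by blast
  define \<tau>s where "\<tau>s = \<sigma>s[0 := \<sigma>s ! 0 + Poly_Mapping.single 0 d]"
  have len': "length \<tau>s = length (1 # H)" using len by (simp add: \<tau>s_def)
  have s0: "sos (\<sigma>s ! 0 + Poly_Mapping.single 0 d)"
    using sos len assms(2) by (intro sos_add_const) auto
  have sos': "\<forall>\<sigma>\<in>set \<tau>s. sos \<sigma>"
    using sos s0 set_update_subset_insert[of \<sigma>s 0 "\<sigma>s ! 0 + Poly_Mapping.single 0 d"]
    unfolding \<tau>s_def by blast
  have t0: "\<tau>s ! 0 = \<sigma>s ! 0 + Poly_Mapping.single 0 d" using len by (simp add: \<tau>s_def)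
  have tS: "\<tau>s ! Suc i = \<sigma>s ! Suc i" for i by (simp add: \<tau>s_def)
  have "tdeg (\<sigma>s ! 0) \<le> 2 * k" using deg[rule_format, of 0] by simp
  then have "tdeg (\<tau>s ! 0) \<le> 2 * k"
    unfolding t0 tdeg_le_iff using keys_add[of "\<sigma>s ! 0" "Poly_Mapping.single 0 d"]
    by (auto simp: mdeg_def split: if_splits)
  then have deg': "\<forall>i<length (1 # H). tdeg (\<tau>s ! i * (1 # H) ! i) \<le> 2 * k"
  proof (intro allI impI)
    fix i assume i: "i < length (1 # H)"
    show "tdeg (\<tau>s ! i * (1 # H) ! i) \<le> 2 * k"
    proof (cases i)
      case 0 then show ?thesis using \<open>tdeg (\<tau>s ! 0) \<le> 2 * k\<close> by simp
    next
      case (Suc j) then show ?thesis using deg i by (simp only: tS)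
    qed
  qed
  have e1: "(\<Sum>i<length (1 # H). \<tau>s ! i * (1 # H) ! i) = \<tau>s ! 0 * 1 + (\<Sum>i<length H. \<tau>s ! Suc i * H ! i)"
    by (simp only: length_Cons sum.lessThan_Suc_shift nth_Cons_0 nth_Cons_Suc)
  have e2: "(\<Sum>i<length (1 # H). \<sigma>s ! i * (1 # H) ! i) = \<sigma>s ! 0 * 1 + (\<Sum>i<length H. \<sigma>s ! Suc i * H ! i)"
    by (simp only: length_Cons sum.lessThan_Suc_shift nth_Cons_0 nth_Cons_Suc)
  have "(\<Sum>i<length (1 # H). \<tau>s ! i * (1 # H) ! i) = p + Poly_Mapping.single 0 d"
    unfolding p e1 e2 t0 tS by (simp only: mult_1_right add_ac)
  then have eq: "p + Poly_Mapping.single 0 d = (\<Sum>i<length (1 # H). \<tau>s ! i * (1 # H) ! i)" by (rule sym)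
  show ?thesis unfolding quadmod_def mem_Collect_eq
    by (rule exI[of _ \<tau>s], intro conjI len' sos' deg' eq)
qed

lemma affpoly0: "affpoly 0 (a::real^('v::finite)) = affpoly c a + Poly_Mapping.single 0 (- c)"
proof -
  let ?S = "(\<Sum>v\<in>UNIV. Poly_Mapping.single (Poly_Mapping.single v 1) (a $ v)) :: 'v mpoly"
  have z: "Poly_Mapping.single 0 c + Poly_Mapping.single 0 (- c) = (0 :: 'v mpoly)"
    by (simp only: single_add[symmetric] add.right_inverse single_zero)
  have "Poly_Mapping.single 0 c + ?S + Poly_Mapping.single 0 (- c) =
        (Poly_Mapping.single 0 c + Poly_Mapping.single 0 (- c)) + ?S"
    by (simp only: add_ac)
  also have "\<dots> = Poly_Mapping.single 0 0 + ?S" by (simp only: z single_zero)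
  finally show ?thesis unfolding affpoly_def by (rule sym)
qed




lemma sumsq_norm: "(\<Sum>v\<in>UNIV. (z::real^('v::finite)) $ v ^ 2) = norm z ^ 2"
proof -
  have "norm z ^ 2 = z \<bullet> z" by (rule power2_norm_eq_inner)
  then show ?thesis by (simp add: inner_vec_def power2_eq_square)
qed

lemma S_in_theta: fixes gs :: "('n::finite) mpoly list"
  assumes x: "x \<in> S_set gs" shows "x \<in> theta_mod k (Gt gs)"
proof -
  define e where "e = embed 1 x"
  define r where "r = norm e"
  have "e \<noteq> 0" unfolding e_def by (metis embed_None zero_index zero_neq_one)
  then have r: "r > 0" by (simp add: r_def)
  define w where "w = (1/r) *\<^sub>R e"
  have nw: "norm w = 1" using r by (simp add: w_def r_def)
  have wN: "w $ None = 1/r" by (simp add: w_def e_def)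
  have wS: "\<forall>v. w $ Some v = 1/r * x $ v" by (simp add: w_def e_def)
  have hnn: "\<forall>h\<in>set (Gt gs). meval h (($) w) \<ge> 0"
  proof
    fix h assume "h \<in> set (Gt gs)"
    then consider (g) g where "g \<in> set gs" "h = homog g" | (x0) "h = Xvar None"
      | (n1) "h = normsq - 1" | (n2) "h = 1 - normsq"
      unfolding Gt_def by auto
    then show "meval h (($) w) \<ge> 0"
    proof cases
      case g
      have "meval h (($) w) = (1/r) ^ tdeg g * meval g (($) x)"
        unfolding g(2) by (rule meval_homog) (use wN wS in auto)
      moreover have "meval g (($) x) \<ge> 0" using x g(1) by (auto simp: S_set_def)
      ultimately show ?thesis using r by simp
    next
      case x0 then show ?thesis using r by (simp add: meval_Xvar wN)
    next
      case n1 then show ?thesis using nw by (simp add: meval_diff meval_normsq sumsq_norm)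
    next
      case n2 then show ?thesis using nw by (simp add: meval_diff meval_normsq sumsq_norm)
    qed
  qed
  show ?thesis unfolding theta_mod_def
  proof (intro CollectI ballI impI)
    fix l assume l: "l \<in> quadmod (Gt gs) k" "linform l"
    have "meval l (($) w) \<ge> 0" by (rule meval_quadmod[OF l(1) hnn])
    then have "lv l \<bullet> w \<ge> 0" using meval_linform_inner[OF l(2)] by simp
    then have "lv l \<bullet> e \<ge> 0" using r by (simp add: w_def zero_le_divide_iff)
    then show "meval l (($) (embed 1 x)) \<ge> 0" using meval_linform_inner[OF l(2)] by (simp add: e_def)
  qed
qed

lemma theta_closed_convex: "closed (theta_mod k (H :: ('n::finite) option mpoly list)) \<and> convex (theta_mod k H)"
proof -
  have eq: "theta_mod k H = (\<Inter>l\<in>{l\<in>quadmod H k. linform l}.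
     {x. (\<chi> j. lv l $ Some j) \<bullet> x \<ge> - (lv l $ None)})"
  proof -
    have aux: "\<And>a b::real. (0 \<le> a + b) = (-a \<le> b)" by linarith
    show ?thesis unfolding theta_mod_def by (auto simp: meval_linform_inner inner_embed aux)
  qed
  show ?thesis unfolding eq
    by (intro conjI closed_INT convex_INT ballI closed_halfspace_ge convex_halfspace_ge)
qed

definition yv :: "real^('n::finite) option \<Rightarrow> real^'n" where
  "yv z = (\<chi> j. z $ Some j / z $ None)"

lemma meval_homog_yv: "z $ None \<noteq> 0 \<Longrightarrow> meval (homog g) (($) z) = (z $ None) ^ tdeg g * meval g (($) (yv z))"
  by (rule meval_homog) (auto simp: yv_def)

lemma St_open_char: assumes "z $ None > 0"
  shows "z \<in> St_open gs \<longleftrightarrow> yv z \<in> S_set gs"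
proof -
  have pos: "z $ None ^ n > 0" for n using assms by simp
  have aux: "c > 0 \<Longrightarrow> (0 \<le> c * b) = (0 \<le> b)" for c b :: real by (simp add: zero_le_mult_iff)
  show ?thesis using assms by (simp add: St_open_def S_set_def meval_homog_yv aux[OF pos])
qed

lemma z_embed: "z $ None \<noteq> 0 \<Longrightarrow> z = z $ None *\<^sub>R embed 1 (yv z)"
proof (subst vec_eq_iff, intro allI)
  fix i assume h: "z $ None \<noteq> 0"
  show "z $ i = (z $ None *\<^sub>R embed 1 (yv z)) $ i"
    using h by (cases i) (auto simp: yv_def)
qed

lemma yv_scale: "s \<noteq> 0 \<Longrightarrow> yv (s *\<^sub>R z) = yv z"
  by (simp add: yv_def)

lemma St_open_cone: "z \<in> St_open gs \<Longrightarrow> s > 0 \<Longrightarrow> s *\<^sub>R z \<in> St_open gs"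
proof -
  assume z: "z \<in> St_open gs" and s: "s > 0"
  have z0: "z $ None > 0" using z by (simp add: St_open_def)
  then have "yv z \<in> S_set gs" using z St_open_char by blast
  moreover have "(s *\<^sub>R z) $ None > 0" using z0 s by simp
  ultimately show ?thesis using St_open_char yv_scale s by (metis less_irrefl)
qed

lemma semialg_Gt: "z \<in> semialg (Gt gs) \<Longrightarrow> z \<in> St_closed gs \<and> norm z = 1"
proof -
  assume z: "z \<in> semialg (Gt gs)"
  have a: "\<forall>g\<in>set gs. meval (homog g) (($) z) \<ge> 0" using z by (auto simp: semialg_def Gt_def)
  have b: "z $ None \<ge> 0" using z by (auto simp: semialg_def Gt_def meval_Xvar)
  have "norm z ^ 2 = 1" using z
    by (auto simp: semialg_def Gt_def meval_diff meval_normsq sumsq_norm)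
  then have "norm z = 1 \<or> norm z = -1" by (simp add: power2_eq_1_iff)
  then have "norm z = 1" using norm_ge_zero[of z] by linarith
  with a b show ?thesis by (simp add: St_closed_def)
qed

lemma hull_cone: assumes "w \<in> convex hull A" "\<And>z. z \<in> A \<Longrightarrow> s *\<^sub>R z \<in> A"
  shows "s *\<^sub>R w \<in> convex hull A"
proof -
  have "s *\<^sub>R w \<in> (\<lambda>x. s *\<^sub>R x) ` (convex hull A)" using assms(1) by blast
  also have "\<dots> = convex hull ((\<lambda>x. s *\<^sub>R x) ` A)" by (rule convex_hull_scaling[symmetric])
  also have "\<dots> \<subseteq> convex hull A" using assms(2) by (intro hull_mono) auto
  finally show ?thesis .
qed

lemma closure_cone: fixes A :: "'a::real_normed_vector set"
  assumes "z \<in> closure A" "\<And>z. z \<in> A \<Longrightarrow> s *\<^sub>R z \<in> A"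
  shows "s *\<^sub>R z \<in> closure A"
proof -
  have "s *\<^sub>R z \<in> (*\<^sub>R) s ` closure A" using assms(1) by blast
  also have "\<dots> = closure ((*\<^sub>R) s ` A)" by (rule closure_scaleR)
  also have "\<dots> \<subseteq> closure A" using assms(2) by (intro closure_mono) auto
  finally show ?thesis .
qed

lemma pointed_convex_minus0:
  fixes K :: "'a::real_vector set"
  assumes p: "pointed K" and c: "convex K" and cone: "\<And>w s. w \<in> K \<Longrightarrow> s > 0 \<Longrightarrow> s *\<^sub>R w \<in> K"
  shows "convex (K - {0})"
  unfolding convex_def
proof (intro ballI allI impI)
  fix x y u v assume x: "x \<in> K - {0}" and y: "y \<in> K - {0}" and uv: "0 \<le> (u::real)" "0 \<le> v" "u + v = 1"
  show "u *\<^sub>R x + v *\<^sub>R y \<in> K - {0}"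
  proof (cases "u = 0 \<or> v = 0")
    case True
    then show ?thesis
    proof
      assume "u = 0" then have "v = 1" using uv by simp
      then show ?thesis using \<open>u = 0\<close> y by simp
    next
      assume "v = 0" then have "u = 1" using uv by simp
      then show ?thesis using \<open>v = 0\<close> x by simp
    qed
  next
    case False
    then have u: "u > 0" and v: "v > 0" using uv by auto
    have "u *\<^sub>R x + v *\<^sub>R y \<in> K" using x y uv by (intro convexD[OF c]) auto
    moreover have "u *\<^sub>R x + v *\<^sub>R y \<noteq> 0"
    proof
      assume h: "u *\<^sub>R x + v *\<^sub>R y = 0"
      have ux: "u *\<^sub>R x \<in> K" using cone[of x u] x u by blast
      have vy: "v *\<^sub>R y \<in> K" using cone[of y v] y v by blast
      have "u *\<^sub>R x = - (v *\<^sub>R y)" using h by (simp add: eq_neg_iff_add_eq_0)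
      then have "u *\<^sub>R x \<in> uminus ` K" using vy by (rule image_eqI)
      then have "u *\<^sub>R x \<in> K \<inter> uminus ` K" using ux by blast
      then have "u *\<^sub>R x = 0" using p unfolding pointed_def by blast
      then show False using u x by simp
    qed
    ultimately show ?thesis by simp
  qed
qed




theorem mainTheorem7:
  fixes gs :: "('n::finite) mpoly list" and k' :: nat
  assumes "assumptionA gs"
    and "pp_bdr (Gt gs) k'"
  shows "closure (convex hull (S_set gs)) = theta_mod k' (Gt gs)"
proof
  have tc: "closed (theta_mod k' (Gt gs))" "convex (theta_mod k' (Gt gs))"
    using theta_closed_convex by auto
  have "convex hull (S_set gs) \<subseteq> theta_mod k' (Gt gs)"
    by (rule hull_minimal) (use S_in_theta tc(2) in blast)+
  then show "closure (convex hull (S_set gs)) \<subseteq> theta_mod k' (Gt gs)"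
    by (rule closure_minimal[OF _ tc(1)])
next
  define C where "C = closure (convex hull (S_set gs))"
  define Op where "Op = St_open gs"
  define K where "K = convex hull (closure Op)"
  have clinf: "closure Op = St_closed gs" and Kcl: "closed K" and Kp: "pointed K"
    using assms(1) by (auto simp: assumptionA_def closed_at_infinity_def Op_def K_def)
  obtain N :: "(real \<times> (real^'n option)) set" where Nnull: "N \<in> null_sets lebesgue"
    and NP: "\<And>c a. (c, a) \<notin> N \<Longrightarrow> (\<forall>z\<in>semialg (Gt gs). meval (affpoly c a) (($) z) > 0) \<Longrightarrow>
        affpoly c a \<in> quadmod (Gt gs) k'"
    using assms(2) unfolding pp_bdr_def by blast
  show "theta_mod k' (Gt gs) \<subseteq> closure (convex hull (S_set gs))"
  proof
    fix x assume xT: "x \<in> theta_mod k' (Gt gs)"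
    show "x \<in> closure (convex hull (S_set gs))"
    proof (rule ccontr)
      assume "x \<notin> closure (convex hull (S_set gs))"
      then have xC: "x \<notin> C" by (simp add: C_def)
      have "convex C" "closed C" by (auto simp: C_def)
      then obtain a b where ab1: "a \<bullet> x < b" and ab2: "\<forall>y\<in>C. b < a \<bullet> y"
        using separating_hyperplane_closed_point[of C x] xC by blast
      define L :: "real^'n option" where "L = (\<chi> i. case i of None \<Rightarrow> -b | Some j \<Rightarrow> a $ j)"
      have La: "(\<chi> j. L $ Some j) = a" by (simp add: L_def vec_eq_iff)
      have Lemb: "L \<bullet> embed t y = -b * t + a \<bullet> y" for t y
        by (simp add: inner_embed La) (simp add: L_def)
      have Lpos: "L \<bullet> z > 0" if z: "z \<in> Op" for z
      proof -
        have z0: "z $ None > 0" using z by (simp add: Op_def St_open_def)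
        then have "yv z \<in> S_set gs" using z St_open_char[OF z0] by (simp add: Op_def)
        then have "yv z \<in> convex hull (S_set gs)" by (rule hull_inc)
        then have "yv z \<in> C" unfolding C_def by (rule set_mp[OF closure_subset])
        then have "b < a \<bullet> yv z" using ab2 by blast
        moreover have "L \<bullet> z = z $ None * (-b + a \<bullet> yv z)"
          using z_embed[of z] z0 Lemb[of 1 "yv z"] by (metis inner_scaleR_right less_irrefl mult.right_neutral)
        ultimately show ?thesis using z0 by simp
      qed
      have "closure Op \<subseteq> {w. L \<bullet> w \<ge> 0}"
        by (rule closure_minimal) (use Lpos less_imp_le in \<open>auto intro: closed_halfspace_ge\<close>)
      then have "K \<subseteq> {w. L \<bullet> w \<ge> 0}" unfolding K_def
        by (rule hull_minimal) (rule convex_halfspace_ge)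
      then have LK: "\<And>w. w \<in> K \<Longrightarrow> L \<bullet> w \<ge> 0" by blast
      have Kcone: "s *\<^sub>R w \<in> K" if "w \<in> K" "s > 0" for w s
        unfolding K_def
      proof (rule hull_cone)
        show "w \<in> convex hull closure Op" using that(1) by (simp add: K_def)
        fix z assume "z \<in> closure Op"
        then show "s *\<^sub>R z \<in> closure Op"
          by (rule closure_cone) (use St_open_cone that(2) in \<open>auto simp: Op_def\<close>)
      qed
      have Kconv: "convex K" unfolding K_def by (rule convex_convex_hull)
      define D where "D = K \<inter> sphere 0 1"
      have Dc: "compact D" unfolding D_def by (rule closed_Int_compact[OF Kcl compact_sphere])
      have "D \<subseteq> K - {0}" by (auto simp: D_def)
      moreover have "convex (K - {0})" by (rule pointed_convex_minus0[OF Kp Kconv Kcone])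
      ultimately have hD: "convex hull D \<subseteq> K - {0}" by (rule hull_minimal)
      have "closed (convex hull D)" using compact_convex_hull[OF Dc] by (rule compact_imp_closed)
      moreover have "0 \<notin> convex hull D" using hD by blast
      ultimately obtain M b0 where b0: "0 < b0" and Mb: "\<forall>u\<in>convex hull D. M \<bullet> u > b0"
        using separating_hyperplane_closed_0[of "convex hull D"] by blast
      have MD: "M \<bullet> u > b0" if "u \<in> D" for u using Mb hull_inc[of u D convex, OF that] by blast
      define e where "e = embed 1 x"
      define eta where "eta = - (L \<bullet> e)"
      have eta: "eta > 0" using ab1 by (simp add: eta_def e_def Lemb)
      define eps where "eps = eta / (2 * (\<bar>M \<bullet> e\<bar> + 1))"
      have eps: "eps > 0" using eta by (simp add: eps_def)
      have epsM: "eps * \<bar>M \<bullet> e\<bar> \<le> eta / 2"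
      proof -
        have nz: "\<bar>M \<bullet> e\<bar> + 1 > 0" by (simp add: add_nonneg_pos)
        have "eps * (\<bar>M \<bullet> e\<bar> + 1) = eta / 2" using nz unfolding eps_def by (simp add: field_simps)
        then show ?thesis using eps by (simp add: distrib_left)
      qed
      define aE where "aE = L + eps *\<^sub>R M"
      have aEe: "aE \<bullet> e \<le> - eta / 2"
      proof -
        have "aE \<bullet> e = - eta + eps * (M \<bullet> e)" by (simp add: aE_def eta_def inner_add_left)
        moreover have "eps * (M \<bullet> e) \<le> eps * \<bar>M \<bullet> e\<bar>" using eps by (intro mult_left_mono) auto
        ultimately show ?thesis using epsM by linarith
      qed
      define m where "m = eps * b0"
      have m: "m > 0" using eps b0 by (simp add: m_def)
      have aED: "aE \<bullet> u \<ge> m" if u: "u \<in> D" for u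
      proof -
        have "L \<bullet> u \<ge> 0" using u LK by (simp add: D_def)
        moreover have "eps * b0 \<le> eps * (M \<bullet> u)" using MD[OF u] eps by (intro mult_left_mono) auto
        ultimately show ?thesis by (simp add: aE_def m_def inner_add_left)
      qed
      define delta where "delta = min (m / 2) (eta / (norm e + 1))"
      have delta: "delta > 0" using m eta by (simp add: delta_def add_nonneg_pos)
      have dm: "delta \<le> m / 2" unfolding delta_def by (rule min.cobounded1)
      have de: "delta * norm e < eta"
      proof -
        have "delta \<le> eta / (norm e + 1)" unfolding delta_def by (rule min.cobounded2)
        then have "delta * (norm e + 1) \<le> eta" by (simp add: pos_le_divide_eq add_nonneg_pos)
        then show ?thesis using delta by (simp add: distrib_left)
      qed
      define p0 where "p0 = (- delta / 2, aE)"
      have "\<not> ball p0 (delta / 2) \<subseteq> N"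
      proof
        assume sub: "ball p0 (delta / 2) \<subseteq> N"
        have nN: "negligible N" using Nnull by (simp only: negligible_iff_null_sets)
        have nb: "negligible (ball p0 (delta / 2))" by (rule negligible_subset[OF nN sub])
        have "p0 \<in> ball p0 (delta / 2)" using delta by (simp only: centre_in_ball)
        then have "ball p0 (delta / 2) \<noteq> {}" by blast
        then show False using open_not_negligible[OF open_ball] nb by blast
      qed
      then obtain q where qb: "q \<in> ball p0 (delta / 2)" and qN: "q \<notin> N" by (meson subsetI)
      obtain c a' where q: "q = (c, a')" by (cases q)
      have nd: "norm (p0 - q) < delta / 2" using qb by (simp add: dist_norm)
      have pq: "p0 - q = (- delta / 2 - c, aE - a')" by (simp add: p0_def q)
      have "norm (- delta / 2 - c) \<le> norm (p0 - q)" unfolding pq by (rule norm_fst_le)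
      then have c1: "\<bar>- delta / 2 - c\<bar> < delta / 2" using nd by simp
      have "norm (aE - a') \<le> norm (p0 - q)" unfolding pq by (rule norm_snd_le)
      then have a1: "norm (aE - a') < delta / 2" using nd by simp
      have cneg: "c < 0" and cgt: "c > - delta" using c1 unfolding abs_less_iff by linarith+
      have pos: "\<forall>z\<in>semialg (Gt gs). meval (affpoly c a') (($) z) > 0"
      proof
        fix z assume z: "z \<in> semialg (Gt gs)"
        have "z \<in> St_closed gs" "norm z = 1" using semialg_Gt[OF z] by auto
        then have "z \<in> closure Op" "norm z = 1" using clinf by auto
        then have "z \<in> K" unfolding K_def by (intro hull_inc)
        then have "z \<in> D" unfolding D_def using \<open>norm z = 1\<close> by simp
        then have "aE \<bullet> z \<ge> m" by (rule aED)
        moreover have "(aE - a') \<bullet> z \<le> norm (aE - a') * norm z" by (rule norm_cauchy_schwarz)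
        moreover have "a' \<bullet> z = aE \<bullet> z - (aE - a') \<bullet> z" by (simp add: inner_diff_left)
        ultimately have "a' \<bullet> z \<ge> m - delta / 2" using a1 \<open>norm z = 1\<close> by simp
        then show "meval (affpoly c a') (($) z) > 0" using cgt dm m unfolding meval_affpoly_inner by linarith
      qed
      have "affpoly c a' \<in> quadmod (Gt gs) k'" using NP[OF _ pos] qN q by blast
      then have "affpoly c a' + Poly_Mapping.single 0 (- c) \<in> quadmod (Gt gs) k'"
        using cneg by (intro quadmod_add_const) auto
      then have l: "affpoly 0 a' \<in> quadmod (Gt gs) k'" by (simp only: affpoly0[symmetric])
      have "meval (affpoly 0 a') (($) e) \<ge> 0"
        using xT l linform_affpoly0 unfolding theta_mod_def e_def by blast
      then have ge: "a' \<bullet> e \<ge> 0" by (simp add: meval_affpoly_inner)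
      have h1: "(a' - aE) \<bullet> e \<le> norm (aE - a') * norm e"
        using norm_cauchy_schwarz[of "a' - aE" e] by (simp add: norm_minus_commute)
      have h2: "(aE - a') \<bullet> e = - ((a' - aE) \<bullet> e)" by (simp add: inner_diff_left)
      have "(aE - a') \<bullet> e \<ge> - (norm (aE - a') * norm e)" using h1 h2 by linarith
      moreover have "norm (aE - a') * norm e \<le> delta / 2 * norm e"
        using a1 by (intro mult_right_mono) auto
      moreover have "a' \<bullet> e = aE \<bullet> e - (aE - a') \<bullet> e" by (simp add: inner_diff_left)
      ultimately have "a' \<bullet> e \<le> - eta / 2 + delta / 2 * norm e" using aEe by linarith
      then show False using ge de by linarith
    qed
  qed
qed


end
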